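(* Let $I$ be an ideal of a Noetherian ring $A$. Then $$I_>\subseteq\bigcap_{J\in\mathcal{MR}(I)}{}^*J.$$
   Context: $\overline{v}_I(a)=\lim_{n\to\infty}\operatorname{ord}_I(a^n)/n$ where $\operatorname{ord}_I(a)=\max\{n: a\in I^n\}$ ($\infty$ if $a\in\bigcap_nI^n$); $I_>=\{a\in A\mid\overline{v}_I(a)>1\}$. A reduction of $I$ is an ideal $J\subseteq I$ with $\overline{J}=\overline{I}$ (integral closures); $\mathcal{MR}(I)$ is the set of minimal reductions of $I$ (reductions minimal with respect to inclusion). ${}^*J$ is the weak subintegral closure of $J$: $b\in A$ lies in ${}^*J$ if there exist $q\in\mathbb{N}$ and $a_i\in J^i$ ($1\le i\le 2q+1$) with $b^n+\sum_{i=1}^n\binom{n}{i}a_ib^{n-i}=0$ for $q+1\le n\le 2q+1$. *)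

theory Defs
  imports "HOL-Analysis.Analysis" "HOL-Library.Extended_Nat" "HOL-Library.Extended_Real"
begin

definition is_ideal :: "'a::comm_ring_1 set \<Rightarrow> bool" where
  "is_ideal I \<longleftrightarrow> 0 \<in> I \<and> (\<forall>x\<in>I. \<forall>y\<in>I. x + y \<in> I) \<and> (\<forall>r. \<forall>x\<in>I. r * x \<in> I)"

definition ideal_gen :: "'a::comm_ring_1 set \<Rightarrow> 'a set" where
  "ideal_gen S = \<Inter>{J. is_ideal J \<and> S \<subseteq> J}"

definition noetherian_ring :: "'a::comm_ring_1 itself \<Rightarrow> bool" where
  "noetherian_ring _ \<longleftrightarrow> (\<forall>I::'a set. is_ideal I \<longrightarrow> (\<exists>F. finite F \<and> I = ideal_gen F))"

fun ideal_pow :: "'a::comm_ring_1 set \<Rightarrow> nat \<Rightarrow> 'a set" where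
  "ideal_pow I 0 = UNIV"
| "ideal_pow I (Suc n) = ideal_gen {x * y | x y. x \<in> I \<and> y \<in> ideal_pow I n}"

definition ideal_ord :: "'a::comm_ring_1 set \<Rightarrow> 'a \<Rightarrow> enat" where
  "ideal_ord I a = (if \<forall>n. a \<in> ideal_pow I n then \<infinity>
                    else enat (GREATEST n. a \<in> ideal_pow I n))"

definition vbar :: "'a::comm_ring_1 set \<Rightarrow> 'a \<Rightarrow> ereal" where
  "vbar I a = lim (\<lambda>n. ereal_of_enat (ideal_ord I (a ^ n)) / ereal (real n))"

definition I_gt :: "'a::comm_ring_1 set \<Rightarrow> 'a set" where
  "I_gt I = {a. vbar I a > 1}"

definition ideal_int_closure :: "'a::comm_ring_1 set \<Rightarrow> 'a set" where
  "ideal_int_closure I = {b. \<exists>n\<ge>1. \<exists>c::nat \<Rightarrow> 'a.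
      (\<forall>i\<in>{1..n}. c i \<in> ideal_pow I i) \<and>
      b ^ n + (\<Sum>i=1..n. c i * b ^ (n - i)) = 0}"

definition is_reduction :: "'a::comm_ring_1 set \<Rightarrow> 'a set \<Rightarrow> bool" where
  "is_reduction J I \<longleftrightarrow> is_ideal J \<and> J \<subseteq> I \<and> ideal_int_closure J = ideal_int_closure I"

definition min_reductions :: "'a::comm_ring_1 set \<Rightarrow> 'a set set" where
  "min_reductions I = {J. is_reduction J I \<and> (\<forall>K. is_reduction K I \<and> K \<subseteq> J \<longrightarrow> K = J)}"

definition weak_subint_closure :: "'a::comm_ring_1 set \<Rightarrow> 'a set" where
  "weak_subint_closure J = {b. \<exists>q::nat. \<exists>a::nat \<Rightarrow> 'a.
      (\<forall>i\<in>{1..2*q+1}. a i \<in> ideal_pow J i) \<and>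
      (\<forall>n\<in>{q+1..2*q+1}. b ^ n + (\<Sum>i=1..n. of_nat (n choose i) * a i * b ^ (n - i)) = 0)}"

end

theory Submission
  imports Defs "HOL-Library.Multiset"
begin


lemma ideal_UNIV: "is_ideal UNIV" by (simp add: is_ideal_def)

lemma ideal_gen_ideal: "is_ideal (ideal_gen S)"
  unfolding ideal_gen_def is_ideal_def by auto

lemma ideal_gen_sub: "S \<subseteq> ideal_gen S"
  unfolding ideal_gen_def by auto

lemma ideal_gen_least: "is_ideal T \<Longrightarrow> S \<subseteq> T \<Longrightarrow> ideal_gen S \<subseteq> T"
  unfolding ideal_gen_def by auto

lemma ideal_gen_mono: "S \<subseteq> T \<Longrightarrow> ideal_gen S \<subseteq> ideal_gen T"
  by (meson ideal_gen_ideal ideal_gen_least ideal_gen_sub order_trans)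

lemma ideal_zero: "is_ideal I \<Longrightarrow> 0 \<in> I" by (simp add: is_ideal_def)
lemma ideal_add: "is_ideal I \<Longrightarrow> x \<in> I \<Longrightarrow> y \<in> I \<Longrightarrow> x + y \<in> I" by (simp add: is_ideal_def)
lemma ideal_lmult: "is_ideal I \<Longrightarrow> x \<in> I \<Longrightarrow> r * x \<in> I" by (simp add: is_ideal_def)
lemma ideal_rmult: "is_ideal I \<Longrightarrow> x \<in> I \<Longrightarrow> x * r \<in> I"
  by (metis ideal_lmult mult.commute)
lemma ideal_neg: "is_ideal I \<Longrightarrow> x \<in> I \<Longrightarrow> - x \<in> I"
  by (metis ideal_lmult mult_minus1)
lemma ideal_sum: "is_ideal I \<Longrightarrow> (\<And>i. i \<in> A \<Longrightarrow> f i \<in> I) \<Longrightarrow> sum f A \<in> I"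
  by (induction A rule: infinite_finite_induct) (auto simp: ideal_zero ideal_add)

lemma ideal_colon: "is_ideal U \<Longrightarrow> is_ideal {x. \<forall>y\<in>T. x * y \<in> U}"
  unfolding is_ideal_def by (auto simp: distrib_right mult.assoc)

lemma ideal_colon1: "is_ideal U \<Longrightarrow> is_ideal {y. f * y \<in> U}"
  unfolding is_ideal_def by (auto simp: distrib_left mult.left_commute)

lemma ideal_pow_ideal: "is_ideal (ideal_pow I n)"
  by (cases n) (auto simp: ideal_UNIV ideal_gen_ideal)

lemma ideal_pow_gen: "x \<in> I \<Longrightarrow> y \<in> ideal_pow I n \<Longrightarrow> x * y \<in> ideal_pow I (Suc n)"
  using ideal_gen_sub by fastforce

lemma ideal_pow_mult: "x \<in> ideal_pow I p \<Longrightarrow> y \<in> ideal_pow I q \<Longrightarrow> x * y \<in> ideal_pow I (p + q)"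
proof (induction p arbitrary: x y)
  case 0
  then show ?case using ideal_lmult[OF ideal_pow_ideal] by simp
next
  case (Suc p)
  let ?T = "{x. \<forall>y\<in>ideal_pow I q. x * y \<in> ideal_pow I (Suc p + q)}"
  have "ideal_gen {x * y |x y. x \<in> I \<and> y \<in> ideal_pow I p} \<subseteq> ?T"
  proof (rule ideal_gen_least[OF ideal_colon[OF ideal_pow_ideal]], safe)
    fix u v y assume "u \<in> I" "v \<in> ideal_pow I p" "y \<in> ideal_pow I q"
    then have "v * y \<in> ideal_pow I (p + q)" using Suc.IH by blast
    then show "u * v * y \<in> ideal_pow I (Suc p + q)"
      using ideal_pow_gen[OF \<open>u \<in> I\<close>] by (simp add: mult.assoc)
  qed
  then show ?case using Suc.prems by auto
qed

lemma ideal_pow_Suc_sub: "ideal_pow I (Suc n) \<subseteq> ideal_pow I n"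
proof (induction n)
  case 0 then show ?case by simp
next
  case (Suc n)
  show ?case apply (subst (2) ideal_pow.simps, subst ideal_pow.simps)
    apply (rule ideal_gen_mono) using Suc by blast
qed

lemma ideal_pow_antimono: "m \<le> n \<Longrightarrow> ideal_pow I n \<subseteq> ideal_pow I m"
  by (induction n rule: dec_induct) (use ideal_pow_Suc_sub in blast)+

lemma ideal_pow_one: "is_ideal I \<Longrightarrow> I \<subseteq> ideal_pow I 1"
proof
  fix x assume "x \<in> I"
  then have "x * 1 \<in> ideal_pow I (Suc 0)" by (intro ideal_pow_gen) auto
  then show "x \<in> ideal_pow I 1" by simp
qed

lemma ideal_pow_power: "x \<in> ideal_pow I k \<Longrightarrow> x ^ t \<in> ideal_pow I (t * k)"
  by (induction t) (auto dest: ideal_pow_mult)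



lemma mon_gen:
  assumes "I = ideal_gen F"
  shows "ideal_pow I N \<subseteq> ideal_gen {prod_mset \<alpha> | \<alpha>. set_mset \<alpha> \<subseteq> F \<and> size \<alpha> = N}"
proof (induction N)
  case 0
  have "1 \<in> ideal_gen {prod_mset \<alpha> | \<alpha>. set_mset \<alpha> \<subseteq> F \<and> size \<alpha> = 0}"
    by (rule subsetD[OF ideal_gen_sub]) (auto intro!: exI[of _ "{#}"])
  then have "z * 1 \<in> ideal_gen {prod_mset \<alpha> | \<alpha>. set_mset \<alpha> \<subseteq> F \<and> size \<alpha> = 0}" for z
    by (rule ideal_lmult[OF ideal_gen_ideal])
  then show ?case by auto
next
  case (Suc N)
  define G where "G N = ideal_gen {prod_mset \<alpha> | \<alpha>. set_mset \<alpha> \<subseteq> F \<and> size \<alpha> = N}" for N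
  have key: "x * y \<in> G (Suc N)" if "x \<in> I" "y \<in> G N" for x y
  proof -
    have "I \<subseteq> {x. \<forall>y\<in>G N. x * y \<in> G (Suc N)}"
      unfolding assms
    proof (rule ideal_gen_least[OF ideal_colon[OF ideal_gen_ideal[of "{prod_mset \<alpha> | \<alpha>. set_mset \<alpha> \<subseteq> F \<and> size \<alpha> = Suc N}", folded G_def]]], safe)
      fix f y assume f: "f \<in> F" and y: "y \<in> G N"
      have "ideal_gen {prod_mset \<alpha> | \<alpha>. set_mset \<alpha> \<subseteq> F \<and> size \<alpha> = N} \<subseteq> {y. f * y \<in> G (Suc N)}"
      proof (rule ideal_gen_least[OF ideal_colon1[OF ideal_gen_ideal[of "{prod_mset \<alpha> | \<alpha>. set_mset \<alpha> \<subseteq> F \<and> size \<alpha> = Suc N}", folded G_def]]], rule subsetI)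
        fix z assume "z \<in> {prod_mset \<alpha> | \<alpha>. set_mset \<alpha> \<subseteq> F \<and> size \<alpha> = N}"
        then obtain \<alpha> where z: "z = prod_mset \<alpha>" "set_mset \<alpha> \<subseteq> F" "size \<alpha> = N" by blast
        then have "f * z \<in> {prod_mset \<alpha> | \<alpha>. set_mset \<alpha> \<subseteq> F \<and> size \<alpha> = Suc N}"
          using f by (intro CollectI exI[of _ "add_mset f \<alpha>"]) simp
        then have "f * z \<in> G (Suc N)" unfolding G_def by (rule subsetD[OF ideal_gen_sub])
        then show "z \<in> {y. f * y \<in> G (Suc N)}" by simp
      qed
      then have "G N \<subseteq> {y. f * y \<in> G (Suc N)}" by (simp only: G_def)
      then show "f * y \<in> G (Suc N)" using y by auto
    qed
    then show ?thesis using that by auto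
  qed
  have "ideal_pow I (Suc N) \<subseteq> G (Suc N)"
    apply (subst ideal_pow.simps)
    apply (rule ideal_gen_least[OF ideal_gen_ideal[of "{prod_mset \<alpha> | \<alpha>. set_mset \<alpha> \<subseteq> F \<and> size \<alpha> = Suc N}", folded G_def]])
  proof (rule subsetI)
    fix z assume "z \<in> {x * y |x y. x \<in> I \<and> y \<in> ideal_pow I N}"
    then obtain x y where "z = x * y" "x \<in> I" "y \<in> ideal_pow I N" by blast
    moreover have "y \<in> G N" using Suc.IH \<open>y \<in> ideal_pow I N\<close> unfolding G_def by blast
    ultimately show "z \<in> G (Suc N)" using key by blast
  qed
  then show ?case by (simp add: G_def)
qed

lemma reduction_power:
  assumes J: "is_ideal J" and fin: "finite F" and IF: "I = ideal_gen F"
    and cl: "F \<subseteq> ideal_int_closure J"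
  shows "\<exists>R. \<forall>N. ideal_pow I N \<subseteq> ideal_pow J (N - R)"
proof -
  have ex: "\<forall>x\<in>F. \<exists>n. n \<ge> 1 \<and> (\<exists>c::nat \<Rightarrow> 'a. (\<forall>i\<in>{1..n}. c i \<in> ideal_pow J i) \<and>
      x ^ n + (\<Sum>i=1..n. c i * x ^ (n - i)) = 0)"
    using cl unfolding ideal_int_closure_def by blast
  then obtain nn cc where h: "\<And>x. x \<in> F \<Longrightarrow> nn x \<ge> 1 \<and> (\<forall>i\<in>{1..nn x}. cc x i \<in> ideal_pow J i) \<and>
      x ^ nn x + (\<Sum>i=1..nn x. cc x i * x ^ (nn x - i)) = 0"
  proof -
    from bchoice[OF ex] obtain nn where nn: "\<forall>x\<in>F. nn x \<ge> 1 \<and> (\<exists>c::nat \<Rightarrow> 'a. (\<forall>i\<in>{1..nn x}. c i \<in> ideal_pow J i) \<and>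
      x ^ nn x + (\<Sum>i=1..nn x. c i * x ^ (nn x - i)) = 0)" by blast
    then have "\<forall>x\<in>F. \<exists>c::nat \<Rightarrow> 'a. (\<forall>i\<in>{1..nn x}. c i \<in> ideal_pow J i) \<and>
      x ^ nn x + (\<Sum>i=1..nn x. c i * x ^ (nn x - i)) = 0" by blast
    from bchoice[OF this] obtain cc where "\<forall>x\<in>F. (\<forall>i\<in>{1..nn x}. cc x i \<in> ideal_pow J i) \<and>
      x ^ nn x + (\<Sum>i=1..nn x. cc x i * x ^ (nn x - i)) = 0" by blast
    with nn that show ?thesis by blast
  qed
  define R where "R = (\<Sum>x\<in>F. nn x - 1)"
  have claim: "set_mset \<alpha> \<subseteq> F \<Longrightarrow> prod_mset \<alpha> \<in> ideal_pow J (size \<alpha> - R)" for \<alpha>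
  proof (induction "size \<alpha>" arbitrary: \<alpha> rule: less_induct)
    case less
    show ?case
    proof (cases "size \<alpha> \<le> R")
      case True then show ?thesis by simp
    next
      case False
      have "\<exists>x\<in>F. count \<alpha> x \<ge> nn x"
      proof (rule ccontr)
        assume "\<not> ?thesis"
        then have lt: "\<And>x. x \<in> F \<Longrightarrow> count \<alpha> x \<le> nn x - 1" by fastforce
        have "size \<alpha> = (\<Sum>x\<in>set_mset \<alpha>. count \<alpha> x)" by (rule size_multiset_overloaded_eq)
        also have "\<dots> = (\<Sum>x\<in>F. count \<alpha> x)"
          by (rule sum.mono_neutral_left[OF fin less.prems]) (simp add: not_in_iff)
        also have "\<dots> \<le> R" unfolding R_def by (rule sum_mono) (use lt in auto)
        finally show False using False by simp
      qed
      then obtain x where x: "x \<in> F" "count \<alpha> x \<ge> nn x" by blast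
      define n where "n = nn x"
      define \<beta> where "\<beta> = \<alpha> - replicate_mset n x"
      have sub: "replicate_mset n x \<subseteq># \<alpha>" using x n_def by (simp add: count_le_replicate_mset_subset_eq)
      have \<alpha>: "\<alpha> = replicate_mset n x + \<beta>" unfolding \<beta>_def using sub by (simp add: subset_mset.add_diff_inverse)
      have \<beta>F: "set_mset \<beta> \<subseteq> F" using less.prems \<alpha> by (metis le_sup_iff set_mset_union)
      have hx: "n \<ge> 1" "\<And>i. i \<in> {1..n} \<Longrightarrow> cc x i \<in> ideal_pow J i"
        "x ^ n + (\<Sum>i=1..n. cc x i * x ^ (n - i)) = 0" using h[OF x(1)] n_def by auto
      have "prod_mset \<alpha> = x ^ n * prod_mset \<beta>" by (subst \<alpha>) simp
      also have "x ^ n = - (\<Sum>i=1..n. cc x i * x ^ (n - i))" using hx(3) by (simp add: eq_neg_iff_add_eq_0)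
      finally have eq: "prod_mset \<alpha> = - (\<Sum>i=1..n. cc x i * (x ^ (n - i) * prod_mset \<beta>))"
        by (simp add: sum_distrib_right mult.assoc)
      have szb: "size \<alpha> = n + size \<beta>" by (subst \<alpha>) simp
      have "(\<Sum>i=1..n. cc x i * (x ^ (n - i) * prod_mset \<beta>)) \<in> ideal_pow J (size \<alpha> - R)"
      proof (rule ideal_sum[OF ideal_pow_ideal])
        fix i assume i: "i \<in> {1..n}"
        define \<gamma> where "\<gamma> = replicate_mset (n - i) x + \<beta>"
        have "x ^ (n - i) * prod_mset \<beta> = prod_mset \<gamma>" by (simp add: \<gamma>_def)
        moreover have "size \<gamma> < size \<alpha>" using i szb by (simp add: \<gamma>_def)
        moreover have "set_mset \<gamma> \<subseteq> F" using \<beta>F x(1) by (auto simp: \<gamma>_def)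
        ultimately have "x ^ (n - i) * prod_mset \<beta> \<in> ideal_pow J (size \<gamma> - R)" using less.hyps[of \<gamma>] by simp
        then have "cc x i * (x ^ (n - i) * prod_mset \<beta>) \<in> ideal_pow J (i + (size \<gamma> - R))"
          using ideal_pow_mult hx(2)[OF i] by blast
        moreover have "size \<alpha> - R \<le> i + (size \<gamma> - R)" using i szb by (simp add: \<gamma>_def)
        ultimately show "cc x i * (x ^ (n - i) * prod_mset \<beta>) \<in> ideal_pow J (size \<alpha> - R)"
          using ideal_pow_antimono by blast
      qed
      then show ?thesis unfolding eq by (rule ideal_neg[OF ideal_pow_ideal])
    qed
  qed
  have "ideal_pow I N \<subseteq> ideal_pow J (N - R)" for N
  proof -
    have "ideal_gen {prod_mset \<alpha> | \<alpha>. set_mset \<alpha> \<subseteq> F \<and> size \<alpha> = N} \<subseteq> ideal_pow J (N - R)"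
      by (rule ideal_gen_least[OF ideal_pow_ideal]) (use claim in blast)
    then show ?thesis using mon_gen[OF IF] by blast
  qed
  then show ?thesis by blast
qed



fun cc :: "nat \<Rightarrow> nat \<Rightarrow> int" where
 "cc q i = (if i = 0 then 1 else if i \<le> q then 0 else - (\<Sum>j<i. int (i choose j) * cc q j))"
declare cc.simps[simp del]

lemma cc_sum: assumes "q < n" shows "(\<Sum>i=1..n. int (n choose i) * cc q i) = -1"
proof -
  have "(\<Sum>i\<le>n. int (n choose i) * cc q i) = (\<Sum>i<n. int (n choose i) * cc q i) + cc q n"
    by (simp add: lessThan_Suc_atMost[symmetric])
  also have "cc q n = - (\<Sum>j<n. int (n choose j) * cc q j)" using assms by (subst cc.simps) simp
  finally have "(\<Sum>i\<le>n. int (n choose i) * cc q i) = 0" by simp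
  moreover have "(\<Sum>i\<le>n. int (n choose i) * cc q i) = cc q 0 + (\<Sum>i=1..n. int (n choose i) * cc q i)"
    by (simp add: atMost_atLeast0 sum.atLeast_Suc_atMost)
  moreover have "cc q 0 = 1" by (simp add: cc.simps)
  ultimately show ?thesis by simp
qed

lemma weak_sub:
  assumes J: "is_ideal J" and h: "\<And>n. n \<ge> q + 1 \<Longrightarrow> b ^ n \<in> ideal_pow J n"
  shows "b \<in> weak_subint_closure J"
proof -
  define a where "a i = of_int (cc q i) * b ^ i" for i
  have "a i \<in> ideal_pow J i" for i
  proof (cases "i \<le> q")
    case True
    show ?thesis
    proof (cases "i = 0")
      case False
      then have "a i = 0" using True by (simp add: a_def cc.simps)
      then show ?thesis by (simp add: ideal_zero[OF ideal_pow_ideal])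
    qed simp
  next
    case False
    then show ?thesis unfolding a_def by (intro ideal_lmult[OF ideal_pow_ideal] h) simp
  qed
  moreover have "b ^ n + (\<Sum>i=1..n. of_nat (n choose i) * a i * b ^ (n - i)) = 0" if n: "q < n" for n
  proof -
    have "(\<Sum>i=1..n. of_nat (n choose i) * a i * b ^ (n - i)) = (\<Sum>i=1..n. of_int (int (n choose i) * cc q i) * b ^ n)"
    proof (rule sum.cong[OF refl])
      fix i assume "i \<in> {1..n}"
      then have "b ^ i * b ^ (n - i) = b ^ n" by (simp add: power_add[symmetric])
      then show "of_nat (n choose i) * a i * b ^ (n - i) = of_int (int (n choose i) * cc q i) * b ^ n"
        by (simp add: a_def mult.assoc)
    qed
    also have "\<dots> = of_int (\<Sum>i=1..n. int (n choose i) * cc q i) * b ^ n"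
      by (simp add: sum_distrib_right)
    also have "\<dots> = - (b ^ n)" using cc_sum[OF n] by simp
    finally show ?thesis by simp
  qed
  ultimately show ?thesis unfolding weak_subint_closure_def
    by (intro CollectI exI[of _ q] exI[of _ a]) auto
qed



lemma vbar_gt:
  assumes "vbar I a > 1"
  shows "\<exists>m\<ge>1. a ^ m \<in> ideal_pow I (m + 1)"
proof (rule ccontr)
  assume "\<not> ?thesis"
  then have nm: "\<And>m. m \<ge> 1 \<Longrightarrow> a ^ m \<notin> ideal_pow I (m + 1)" by blast
  have bnd: "k \<le> m" if "m \<ge> 1" "a ^ m \<in> ideal_pow I k" for m k
  proof (rule ccontr)
    assume "\<not> k \<le> m"
    then have "ideal_pow I k \<subseteq> ideal_pow I (m + 1)" by (intro ideal_pow_antimono) simp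
    then show False using nm that by blast
  qed
  define u where "u m = (GREATEST k. a ^ m \<in> ideal_pow I k)" for m
  have u_mem: "a ^ m \<in> ideal_pow I (u m)" if "m \<ge> 1" for m
    unfolding u_def by (rule GreatestI_nat[of _ 0 m]) (use bnd that in auto)
  have u_ge: "k \<le> u m" if "m \<ge> 1" "a ^ m \<in> ideal_pow I k" for m k
    unfolding u_def by (rule Greatest_le_nat[of _ k m]) (use bnd that in auto)
  have u_le: "u m \<le> m" if "m \<ge> 1" for m using bnd u_mem that by blast
  have ord: "ideal_ord I (a ^ m) = enat (u m)" if "m \<ge> 1" for m
  proof -
    have "\<not> (\<forall>n. a ^ m \<in> ideal_pow I n)" using nm[OF that] by blast
    then show ?thesis unfolding ideal_ord_def u_def by simp
  qed
  define g where "g n = real (u n) / real n" for n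
  define f where "f n = ereal_of_enat (ideal_ord I (a ^ n)) / ereal (real n)" for n
  have f_eq: "f n = ereal (g n)" if "n \<ge> 1" for n
    using that by (simp add: f_def g_def ord)
  have g0: "0 \<le> g n" for n by (simp add: g_def)
  have g1: "g n \<le> 1" if "n \<ge> 1" for n using u_le[OF that] that by (simp add: g_def)
  have gm: "g m - real m / real n \<le> g n" if m: "m \<ge> 1" and n: "n \<ge> 1" for m n
  proof -
    define t where "t = n div m"
    have "a ^ n = (a ^ m) ^ t * a ^ (n mod m)"
      by (metis power_add power_mult t_def div_mult_mod_eq mult.commute)
    moreover have "(a ^ m) ^ t \<in> ideal_pow I (t * u m)" by (rule ideal_pow_power[OF u_mem[OF m]])
    ultimately have "a ^ n \<in> ideal_pow I (t * u m)" by (metis ideal_rmult ideal_pow_ideal)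
    then have ut: "t * u m \<le> u n" using u_ge n by blast
    have nd: "n = t * m + n mod m" by (simp add: t_def)
    have "n mod m < m" using m by simp
    then have "real (n mod m) \<le> real m" by simp
    moreover have "real n = real t * real m + real (n mod m)" using nd by (metis of_nat_add of_nat_mult)
    ultimately have tm: "real n - real m \<le> real t * real m" by linarith
    have um: "real (u m) = g m * real m" using m by (simp add: g_def)
    have "(real n - real m) * g m \<le> real t * real m * g m" using tm g0 by (simp add: mult_right_mono)
    also have "\<dots> = real (t * u m)" using um by simp
    also have "\<dots> \<le> real (u n)" using ut by (metis of_nat_le_iff of_nat_mult)
    finally have A: "(real n - real m) * g m \<le> real (u n)" .
    have "g m - real m / real n \<le> g m - real m * g m / real n"
      using g1[OF m] g0[of m] n by (simp add: divide_right_mono mult_left_le)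
    also have "\<dots> = (real n - real m) * g m / real n" using n by (simp add: field_simps)
    also have "\<dots> \<le> real (u n) / real n" using A by (simp add: divide_right_mono)
    finally show ?thesis by (simp add: g_def)
  qed
  define s where "s = Sup (g ` {1..})"
  have bdd: "bdd_above (g ` {1..})" using g1 by (auto intro!: bdd_aboveI[of _ 1])
  have gs: "g n \<le> s" if "n \<ge> 1" for n unfolding s_def using bdd that by (auto intro!: cSup_upper)
  have s1: "s \<le> 1" unfolding s_def using g1 by (auto intro!: cSup_least)
  have "g \<longlonglongrightarrow> s"
  proof (rule LIMSEQ_I)
    fix r :: real assume r: "r > 0"
    have "s - r / 2 < s" using r by simp
    then obtain m where m: "m \<ge> 1" "s - r / 2 < g m"
      unfolding s_def using bdd by (subst (asm) less_cSup_iff) auto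
    obtain N :: nat where N: "N > 2 * real m / r" using reals_Archimedean2 by blast
    show "\<exists>no. \<forall>n\<ge>no. norm (g n - s) < r"
    proof (intro exI[of _ "N + 1"] allI impI)
      fix n assume n: "n \<ge> N + 1"
      then have n1: "n \<ge> 1" by simp
      have "real N \<le> real n" using n by simp
      then have "2 * real m / r < real n" using N by linarith
      then have "2 * real m < real n * r" using r by (simp add: divide_less_eq)
      then have "real m / real n < r / 2" using n1 by (simp add: divide_less_eq mult.commute)
      then have "s - r < g n" using gm[OF m(1) n1] m(2) by linarith
      moreover have "g n \<le> s" using gs n1 .
      ultimately show "norm (g n - s) < r" by simp
    qed
  qed
  then have "(\<lambda>n. ereal (g n)) \<longlonglongrightarrow> ereal s" by (simp add: lim_ereal)
  moreover have "eventually (\<lambda>n. ereal (g n) = f n) sequentially"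
    using f_eq by (auto simp: eventually_sequentially intro!: exI[of _ 1])
  ultimately have "f \<longlonglongrightarrow> ereal s" by (rule Lim_transform_eventually)
  then have "vbar I a = ereal s" unfolding vbar_def f_def[symmetric] by (rule limI)
  then show False using assms s1 by simp
qed



lemma subset_closure: "is_ideal I \<Longrightarrow> I \<subseteq> ideal_int_closure I"
proof
  fix b assume I: "is_ideal I" and b: "b \<in> I"
  have "- b \<in> ideal_pow I 1" using ideal_pow_one[OF I] ideal_neg[OF I b] by blast
  then show "b \<in> ideal_int_closure I" unfolding ideal_int_closure_def
    by (intro CollectI exI[of _ 1] conjI exI[of _ "\<lambda>_. - b"]) auto
qed

lemma main_step:
  assumes J: "is_ideal J"
    and R: "\<And>N. ideal_pow I N \<subseteq> ideal_pow J (N - R)"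
    and m: "m \<ge> 1" "a ^ m \<in> ideal_pow I (m + 1)"
    and n: "n \<ge> m * (R + m) + 1"
  shows "a ^ n \<in> ideal_pow J n"
proof -
  define t where "t = n div m"
  have "(m * (R + m)) div m \<le> n div m" using n by (intro div_le_mono) simp
  then have tR: "R + m \<le> t" using m by (simp add: t_def)
  have "a ^ n = (a ^ m) ^ t * a ^ (n mod m)"
    by (metis power_add power_mult t_def div_mult_mod_eq mult.commute)
  moreover have "(a ^ m) ^ t \<in> ideal_pow I (t * (m + 1))" by (rule ideal_pow_power[OF m(2)])
  ultimately have "a ^ n \<in> ideal_pow I (t * (m + 1))" by (metis ideal_rmult ideal_pow_ideal)
  then have A: "a ^ n \<in> ideal_pow J (t * (m + 1) - R)" using R by blast
  have nd: "n = t * m + n mod m" by (simp add: t_def)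
  have "n mod m < m" using m by simp
  then have "n \<le> t * (m + 1) - R" using nd tR by (simp add: algebra_simps)
  then show ?thesis using A ideal_pow_antimono by blast
qed


theorem corollary4p5:
  fixes I :: "'a::comm_ring_1 set"
  assumes "noetherian_ring TYPE('a)"
    and "is_ideal I"
  shows "I_gt I \<subseteq> \<Inter>(weak_subint_closure ` min_reductions I)"
proof
  fix a assume a: "a \<in> I_gt I"
  show "a \<in> \<Inter>(weak_subint_closure ` min_reductions I)"
  proof
    fix J assume JM: "J \<in> min_reductions I"
    then have red: "is_ideal J" "J \<subseteq> I" "ideal_int_closure J = ideal_int_closure I"
      unfolding min_reductions_def is_reduction_def by auto
    obtain F where F: "finite F" "I = ideal_gen F"
      using assms unfolding noetherian_ring_def by blast
    have "F \<subseteq> ideal_int_closure J"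
      using ideal_gen_sub[of F] F(2) subset_closure[OF assms(2)] red(3) by blast
    then obtain R where R: "\<And>N. ideal_pow I N \<subseteq> ideal_pow J (N - R)"
      using reduction_power[OF red(1) F(1) F(2)] by blast
    have "vbar I a > 1" using a unfolding I_gt_def by simp
    then obtain m where m: "m \<ge> 1" "a ^ m \<in> ideal_pow I (m + 1)" using vbar_gt by blast
    show "a \<in> weak_subint_closure J"
      by (rule weak_sub[OF red(1), of "m * (R + m)"]) (rule main_step[OF red(1) R m], simp)
  qed
qed

end
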